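(* Let $(p_D)_{D\in\mathcal{I}}$ be a probability distribution on $\mathcal{I}$, let $q>1$, and for $\mathbf{Q}\in B(\mathcal{L})$ define $$p^T(\mathbf{Q})=\sum_{S\in\mathcal{P}_{\mathbf{Q}}}\frac{p_S}{q-1}\left(1-p_S^{\,q-1}\right),\qquad p_S=\sum_{D\in S}p_D.$$ Then $p^T$ is an arbitrage-free instance-independent pricing function.
   Context: $\mathcal{I}$ is a countable nonempty set of database instances; queries are deterministic functions on $\mathcal{I}$; a query bundle is a finite tuple of queries from a language $\mathcal{L}$, evaluated componentwise; $B(\mathcal{L})$ is the set of bundles, closed under concatenation $\mathbf{Q}_1,\mathbf{Q}_2$. $\mathcal{P}_{\mathbf{Q}}$ is the partition of $\mathcal{I}$ into the equivalence classes of $D\sim D'\iff\mathbf{Q}(D)=\mathbf{Q}(D')$. An instance-independent pricing function $p$ is arbitrage-free if (i) whenever for all $D',D''\in\mathcal{I}$, $\mathbf{Q}_2(D')=\mathbf{Q}_2(D'')$ implies $\mathbf{Q}_1(D')=\mathbf{Q}_1(D'')$, we have $p(\mathbf{Q}_2)\ge p(\mathbf{Q}_1)$; and (ii) $p(\mathbf{Q}_1,\mathbf{Q}_2)\le p(\mathbf{Q}_1)+p(\mathbf{Q}_2)$ for all bundles. *)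

theory Defs
  imports "HOL-Analysis.Analysis"
begin

definition eval_bundle :: "('i \<Rightarrow> 'o) list \<Rightarrow> 'i \<Rightarrow> 'o list" where
  "eval_bundle Q D = map (\<lambda>f. f D) Q"

definition bundles :: "('i \<Rightarrow> 'o) set \<Rightarrow> ('i \<Rightarrow> 'o) list set" where
  "bundles L = {Q. set Q \<subseteq> L}"

definition partition_of :: "('i \<Rightarrow> 'o) list \<Rightarrow> 'i set set" where
  "partition_of Q = UNIV // {(D, D'). eval_bundle Q D = eval_bundle Q D'}"

definition arbitrage_free :: "('i \<Rightarrow> 'o) set \<Rightarrow> (('i \<Rightarrow> 'o) list \<Rightarrow> real) \<Rightarrow> bool" where
  "arbitrage_free L p \<longleftrightarrow>
     (\<forall>Q1\<in>bundles L. \<forall>Q2\<in>bundles L.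
        (\<forall>D' D''. eval_bundle Q2 D' = eval_bundle Q2 D'' \<longrightarrow> eval_bundle Q1 D' = eval_bundle Q1 D'')
          \<longrightarrow> p Q2 \<ge> p Q1) \<and>
     (\<forall>Q1\<in>bundles L. \<forall>Q2\<in>bundles L. p (Q1 @ Q2) \<le> p Q1 + p Q2)"

definition tsallis_price :: "('i \<Rightarrow> real) \<Rightarrow> real \<Rightarrow> ('i \<Rightarrow> 'o) list \<Rightarrow> real" where
  "tsallis_price pd q Q =
     (\<Sum>\<^sub>\<infinity>S\<in>partition_of Q. infsum pd S / (q - 1) * (1 - infsum pd S powr (q - 1)))"

end

theory Submission
  imports Defs
begin


definition mass :: "('i \<Rightarrow> real) \<Rightarrow> ('i \<Rightarrow> 'b) \<Rightarrow> 'b \<Rightarrow> real" where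
  "mass pd k v = infsum pd (k -` {v})"

lemma TE:
  fixes pd :: "'i \<Rightarrow> real" and k :: "'i \<Rightarrow> 'b" and h :: "'b \<Rightarrow> real"
  assumes nn: "\<And>D. pd D \<ge> 0" and sm: "pd summable_on UNIV"
    and hn: "\<And>v. v \<in> range k \<Longrightarrow> h v \<ge> 0"
  shows "((\<lambda>D. pd D * h (k D)) has_sum S) UNIV \<longleftrightarrow> ((\<lambda>v. mass pd k v * h v) has_sum S) (range k)"
proof -
  define Sg where "Sg = Sigma (range k) (\<lambda>v. k -` {v})"
  define F where "F = (\<lambda>z. pd (snd z) * h (fst z))"
  have inj: "inj_on snd Sg" unfolding Sg_def inj_on_def by auto
  have img: "snd ` Sg = UNIV" unfolding Sg_def by force
  have "((\<lambda>D. pd D * h (k D)) has_sum S) UNIV \<longleftrightarrow> (((\<lambda>D. pd D * h (k D)) \<circ> snd) has_sum S) Sg"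
    using has_sum_reindex[OF inj, of "\<lambda>D. pd D * h (k D)" S] img by simp
  also have "\<dots> \<longleftrightarrow> (F has_sum S) Sg"
    by (rule has_sum_cong) (auto simp: Sg_def F_def)
  finally have eq1: "((\<lambda>D. pd D * h (k D)) has_sum S) UNIV \<longleftrightarrow> (F has_sum S) Sg" .
  have inner: "((\<lambda>D. F (v, D)) has_sum mass pd k v * h v) (k -` {v})" for v
  proof -
    have "pd summable_on (k -` {v})" using summable_on_subset_banach[OF sm] by blast
    then have "(pd has_sum mass pd k v) (k -` {v})" unfolding mass_def by (rule has_sum_infsum)
    from has_sum_cmult_left[OF this, of "h v"] show ?thesis by (simp add: F_def)
  qed
  show ?thesis
  proof
    assume "((\<lambda>D. pd D * h (k D)) has_sum S) UNIV"
    then have "(F has_sum S) Sg" using eq1 by simp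
    then show "((\<lambda>v. mass pd k v * h v) has_sum S) (range k)"
      unfolding Sg_def by (rule has_sum_SigmaD) (rule inner)
  next
    assume A: "((\<lambda>v. mass pd k v * h v) has_sum S) (range k)"
    have "F summable_on Sg" unfolding Sg_def
      by (rule summable_on_SigmaI[OF inner]) (use A hn nn in \<open>auto simp: F_def summable_on_def\<close>)
    then have "(F has_sum S) Sg" unfolding Sg_def
      by (intro has_sum_SigmaI[OF inner A])
    then show "((\<lambda>D. pd D * h (k D)) has_sum S) UNIV" using eq1 by simp
  qed
qed



lemma tangent:
  fixes t m s :: real
  assumes "t \<ge> 0" "m > 0" "s > 0"
  shows "t * t powr s \<ge> m * m powr s + (1+s) * m powr s * (t - m)"
proof -
  have Y: "t * m powr s \<le> t powr (1+s) / (1+s) + (m powr s) powr ((1+s)/s) / ((1+s)/s)"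
    by (rule Youngs_inequality) (use assms in \<open>auto simp: field_simps\<close>)
  have e1: "t powr (1+s) = t * t powr s" using assms by (simp add: powr_add)
  have e2: "(m powr s) powr ((1+s)/s) = m * m powr s" using assms by (simp add: powr_powr powr_add)
  have Y2: "t * m powr s \<le> (t * t powr s + s * (m * m powr s)) / (1+s)"
  proof -
    have "(m * m powr s) / ((1+s)/s) = s * (m * m powr s) / (1+s)" using assms by simp
    then show ?thesis using Y unfolding e1 e2 by (simp add: add_divide_distrib)
  qed
  have "(1+s) * (t * m powr s) \<le> t * t powr s + s * (m * m powr s)"
    using mult_left_mono[OF Y2, of "1+s"] assms by simp
  then show ?thesis by (simp add: algebra_simps)
qed

lemma P1_ineq:
  fixes a r s :: real
  assumes "0 < a" "0 \<le> r" "r \<le> a" "a \<le> 1" "s > 0"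
  shows "(r/a) powr s \<le> 1 - a powr s + r powr s"
proof -
  have "a powr s \<le> 1" using assms by (intro powr_le1) auto
  moreover have "(r/a) powr s \<le> 1" using assms by (intro powr_le1) auto
  ultimately have "0 \<le> (1 - a powr s) * (1 - (r/a) powr s)" by simp
  moreover have "a powr s * (r/a) powr s = r powr s"
    using assms by (simp add: powr_divide)
  ultimately show ?thesis by (simp add: algebra_simps)
qed

lemma P2_ineq:
  fixes a b r s :: real
  assumes "0 < r" "r \<le> a" "0 < b" "s > 0"
  shows "s * b powr s - s * (a * (b * b powr s)) / r \<le> (r/a) powr s - b powr s"
proof -
  have "0 < a" using assms by simp
  have T: "(r/a) * (r/a) powr s \<ge> b * b powr s + (1+s) * b powr s * (r/a - b)"
    by (rule tangent) (use assms \<open>0<a\<close> in auto)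
  have "0 < a / r" using assms \<open>0<a\<close> by simp
  from mult_left_mono[OF T, of "a/r"] have
    "(a/r) * (b * b powr s + (1+s) * b powr s * (r/a - b)) \<le> (a/r) * ((r/a) * (r/a) powr s)"
    using \<open>0 < a/r\<close> by simp
  moreover have "(a/r) * ((r/a) * (r/a) powr s) = (r/a) powr s" using assms \<open>0<a\<close> by simp
  moreover have "(a/r) * (b * b powr s + (1+s) * b powr s * (r/a - b)) =
      (1+s) * b powr s - s * (a * (b * b powr s)) / r"
    using assms \<open>0<a\<close> by (simp add: field_simps)
  ultimately show ?thesis by (simp add: algebra_simps)
qed



lemma hs_neg: "(f has_sum a) A \<Longrightarrow> ((\<lambda>x. - f x) has_sum - (a::real)) A"
  by (simp add: has_sum_uminus)

lemma comb:
  fixes s T A B R Y :: real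
  assumes "s > 0" "T \<le> 1 - A + R" "s*B - s*Y \<le> T - B"
  shows "B - Y \<le> (1 - A - B + R)/s"
proof -
  have "s*(B - Y) \<le> 1 - A - B + R" using assms by (simp add: right_diff_distrib)
  then show ?thesis using assms(1) by (simp add: pos_le_divide_eq mult.commute)
qed

context
  fixes pd :: "'i \<Rightarrow> real" and q :: real
  assumes nn: "\<And>D. pd D \<ge> 0" and tot: "(pd has_sum 1) UNIV" and q1: "q > 1"
begin

lemma sm: "pd summable_on A"
  using summable_on_subset_banach[of pd UNIV A] tot by (auto simp: summable_on_def)

lemma isum_mono: "A \<subseteq> B \<Longrightarrow> infsum pd A \<le> infsum pd B"
  by (rule infsum_mono_neutral[OF sm sm]) (use nn in auto)

lemma mass_le1: "mass pd k v \<le> 1"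
  using isum_mono[of "k -` {v}" UNIV] tot unfolding mass_def by (simp add: infsumI)

lemma mass_nonneg: "mass pd k v \<ge> 0"
  unfolding mass_def by (rule infsum_nonneg) (use nn in auto)

lemma pd_le_mass: "pd D \<le> mass pd k (k D)"
proof -
  have "infsum pd {D} \<le> infsum pd (k -` {k D})" by (rule isum_mono) auto
  then show ?thesis by (simp add: mass_def)
qed

definition gg :: "real \<Rightarrow> real" where "gg x = (1 - x powr (q-1)) / (q-1)"

lemma gg_nonneg: "0 \<le> x \<Longrightarrow> x \<le> 1 \<Longrightarrow> gg x \<ge> 0"
  unfolding gg_def using q1 powr_le1[of "q-1" x] by simp

lemma gg_le: "gg x \<le> 1/(q-1)"
  unfolding gg_def using q1 by (simp add: divide_right_mono)

lemma gg_anti: "0 \<le> x \<Longrightarrow> x \<le> y \<Longrightarrow> gg y \<le> gg x"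
  unfolding gg_def using q1 powr_mono2[of "q-1" x y] by (simp add: divide_right_mono)

lemma bounded_summable:
  assumes "\<And>D. 0 \<le> h D" "\<And>D. h D \<le> C"
  shows "(\<lambda>D. pd D * h D) summable_on UNIV"
proof -
  have "(\<lambda>D. pd D * C) summable_on UNIV"
    using has_sum_cmult_left[OF tot, of C] by (auto simp: summable_on_def)
  then show ?thesis
    by (rule summable_on_comparison_test) (use assms nn in \<open>auto intro: mult_left_mono\<close>)
qed

lemma partition_eq: "partition_of Q = (\<lambda>v. eval_bundle Q -` {v}) ` range (eval_bundle Q)"
proof -
  have e: "\<And>x. {D'. eval_bundle Q x = eval_bundle Q D'} = eval_bundle Q -` {eval_bundle Q x}" by auto
  show ?thesis unfolding partition_of_def quotient_def by (auto simp: e)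
qed

lemma price_has:
  "((\<lambda>D. pd D * gg (mass pd (eval_bundle Q) (eval_bundle Q D))) has_sum tsallis_price pd q Q) UNIV"
proof -
  define k where "k = eval_bundle Q"
  have inj: "inj_on (\<lambda>v. k -` {v}) (range k)"
    unfolding inj_on_def by auto
  have "tsallis_price pd q Q = infsum (\<lambda>v. mass pd k v * gg (mass pd k v)) (range k)"
    unfolding tsallis_price_def partition_eq k_def[symmetric]
    by (subst infsum_reindex[OF inj]) (simp add: o_def mass_def gg_def)
  moreover have S: "(\<lambda>D. pd D * gg (mass pd k (k D))) summable_on UNIV"
    by (rule bounded_summable[OF gg_nonneg[OF mass_nonneg mass_le1] gg_le])
  then obtain S where "((\<lambda>D. pd D * gg (mass pd k (k D))) has_sum S) UNIV"
    by (auto simp: summable_on_def)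
  moreover have "((\<lambda>D. pd D * gg (mass pd k (k D))) has_sum S) UNIV
      \<longleftrightarrow> ((\<lambda>v. mass pd k v * gg (mass pd k v)) has_sum S) (range k)"
    by (rule TE[OF nn sm]) (rule gg_nonneg[OF mass_nonneg mass_le1])
  ultimately have "((\<lambda>v. mass pd k v * gg (mass pd k v)) has_sum S) (range k)"
    and HS: "((\<lambda>D. pd D * gg (mass pd k (k D))) has_sum S) UNIV"
    and P: "tsallis_price pd q Q = infsum (\<lambda>v. mass pd k v * gg (mass pd k v)) (range k)"
    by auto
  then have "tsallis_price pd q Q = S" by (simp add: infsumI)
  then show ?thesis using HS unfolding k_def by simp
qed

lemma mono_part:
  assumes H: "\<forall>D' D''. eval_bundle Q2 D' = eval_bundle Q2 D'' \<longrightarrow> eval_bundle Q1 D' = eval_bundle Q1 D''"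
  shows "tsallis_price pd q Q1 \<le> tsallis_price pd q Q2"
proof (rule has_sum_mono[OF price_has price_has])
  fix D
  have "eval_bundle Q2 -` {eval_bundle Q2 D} \<subseteq> eval_bundle Q1 -` {eval_bundle Q1 D}"
    using H by blast
  then have "mass pd (eval_bundle Q2) (eval_bundle Q2 D) \<le> mass pd (eval_bundle Q1) (eval_bundle Q1 D)"
    unfolding mass_def by (rule isum_mono)
  then have "gg (mass pd (eval_bundle Q1) (eval_bundle Q1 D)) \<le> gg (mass pd (eval_bundle Q2) (eval_bundle Q2 D))"
    by (rule gg_anti[OF mass_nonneg])
  then show "pd D * gg (mass pd (eval_bundle Q1) (eval_bundle Q1 D))
      \<le> pd D * gg (mass pd (eval_bundle Q2) (eval_bundle Q2 D))"
    by (rule mult_left_mono[OF _ nn])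
qed

lemma sub_part:
  "tsallis_price pd q (Q1 @ Q2) \<le> tsallis_price pd q Q1 + tsallis_price pd q Q2"
proof -
  define s where "s = q - 1"
  have s0: "s > 0" using q1 s_def by simp
  define k1 where "k1 = eval_bundle Q1"
  define k2 where "k2 = eval_bundle Q2"
  define k12 where "k12 = eval_bundle (Q1 @ Q2)"
  define K where "K = (\<lambda>D. (k1 D, k2 D))"
  define a where "a = (\<lambda>D. mass pd k1 (k1 D))"
  define b where "b = (\<lambda>D. mass pd k2 (k2 D))"
  define r where "r = (\<lambda>D. mass pd k12 (k12 D))"
  have app: "k12 D' = k12 D \<longleftrightarrow> K D' = K D" for D D'
    unfolding k12_def K_def k1_def k2_def eval_bundle_def map_append
    by (subst append_eq_append_conv) simp_all
  have fib: "k12 -` {k12 D} = K -` {K D}" for D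
    using app[of _ D] by blast
  have rK: "r D = mass pd K (K D)" for D unfolding r_def mass_def fib ..
  have ra: "r D \<le> a D" for D
    unfolding rK a_def mass_def by (rule isum_mono) (auto simp: K_def)
  have rb: "r D \<le> b D" for D
    unfolding rK b_def mass_def by (rule isum_mono) (auto simp: K_def)
  have pr: "pd D \<le> r D" for D unfolding r_def by (rule pd_le_mass)
  have b1: "b D \<le> 1" for D unfolding b_def by (rule mass_le1)
  have a1: "a D \<le> 1" for D unfolding a_def by (rule mass_le1)
  have "(\<lambda>D. pd D * b D powr s) summable_on UNIV"
    by (rule bounded_summable[of _ 1]) (use b1 s0 in \<open>auto intro: powr_le1 simp: b_def mass_nonneg\<close>)
  then obtain Eb where Eb: "((\<lambda>D. pd D * b D powr s) has_sum Eb) UNIV"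
    by (auto simp: summable_on_def)
  have "((\<lambda>D. pd D * mass pd k2 (k2 D) powr s) has_sum Eb) UNIV
      \<longleftrightarrow> ((\<lambda>v. mass pd k2 v * mass pd k2 v powr s) has_sum Eb) (range k2)"
    by (rule TE[OF nn sm]) simp
  with Eb have Eb2: "((\<lambda>v. mass pd k2 v * mass pd k2 v powr s) has_sum Eb) (range k2)"
    by (simp add: b_def)
  have "((\<lambda>D. pd D * 1) has_sum 1) UNIV
      \<longleftrightarrow> ((\<lambda>v. mass pd k1 v * 1) has_sum 1) (range k1)"
    by (rule TE[where h="\<lambda>_. 1", OF nn sm]) simp
  with tot have M1: "((\<lambda>v. mass pd k1 v) has_sum 1) (range k1)" by simp
  define Pr where "Pr = (\<lambda>w. mass pd k1 (fst w) * (mass pd k2 (snd w) * mass pd k2 (snd w) powr s))"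
  have Pr0: "Pr w \<ge> 0" for w unfolding Pr_def by (simp add: mass_nonneg)
  have inner: "((\<lambda>y. Pr (x, y)) has_sum mass pd k1 x * Eb) (range k2)" for x
    unfolding Pr_def using has_sum_cmult_right[OF Eb2, of "mass pd k1 x"] by simp
  have outer: "((\<lambda>x. mass pd k1 x * Eb) has_sum Eb) (range k1)"
    using has_sum_cmult_left[OF M1, of Eb] by simp
  have PrS: "Pr summable_on (range k1 \<times> range k2)"
    by (rule summable_on_SigmaI[OF inner]) (use outer Pr0 in \<open>auto simp: summable_on_def\<close>)
  have PrH: "(Pr has_sum Eb) (range k1 \<times> range k2)"
    by (rule has_sum_SigmaI[OF inner outer PrS])
  define hW where "hW = (\<lambda>w. Pr w / mass pd K w)"
  define fW where "fW = (\<lambda>w. mass pd K w * hW w)"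
  have fW0: "0 \<le> fW w" for w unfolding fW_def hW_def by (simp add: mass_nonneg Pr0)
  have fWle: "fW w \<le> Pr w" for w unfolding fW_def hW_def using Pr0[of w] by simp
  have rsub: "range K \<subseteq> range k1 \<times> range k2" by (auto simp: K_def)
  have fWS: "fW summable_on range K"
    by (rule summable_on_comparison_test[OF summable_on_subset_banach[OF PrS rsub]])
       (use fWle fW0 in auto)
  define W where "W = infsum fW (range K)"
  have WH: "(fW has_sum W) (range K)" unfolding W_def using fWS by (rule has_sum_infsum)
  have WEb: "W \<le> Eb"
  proof -
    have "W \<le> infsum Pr (range k1 \<times> range k2)"
      unfolding W_def by (rule infsum_mono_neutral[OF fWS PrS]) (use fWle rsub Pr0 in auto)
    then show ?thesis using PrH by (simp add: infsumI)
  qed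
  have "((\<lambda>D. pd D * hW (K D)) has_sum W) UNIV \<longleftrightarrow> ((\<lambda>v. mass pd K v * hW v) has_sum W) (range K)"
    by (rule TE[OF nn sm]) (simp add: hW_def Pr0 mass_nonneg)
  with WH have WD: "((\<lambda>D. pd D * hW (K D)) has_sum W) UNIV" by (simp add: fW_def)
  have hWK: "hW (K D) = a D * (b D * b D powr s) / r D" for D
    by (simp add: hW_def Pr_def K_def a_def b_def rK)
  have P1: "((\<lambda>D. pd D * gg (a D)) has_sum tsallis_price pd q Q1) UNIV"
    using price_has[of Q1] by (simp add: a_def k1_def)
  have P2: "((\<lambda>D. pd D * gg (b D)) has_sum tsallis_price pd q Q2) UNIV"
    using price_has[of Q2] by (simp add: b_def k2_def)
  have P12: "((\<lambda>D. pd D * gg (r D)) has_sum tsallis_price pd q (Q1 @ Q2)) UNIV"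
    using price_has[of "Q1 @ Q2"] by (simp add: r_def k12_def)
  have L: "((\<lambda>D. pd D * b D powr s + - (pd D * hW (K D))) has_sum Eb + - W) UNIV"
    by (rule has_sum_add[OF Eb hs_neg[OF WD]])
  have R: "((\<lambda>D. pd D * gg (a D) + pd D * gg (b D) + - (pd D * gg (r D))) has_sum
      tsallis_price pd q Q1 + tsallis_price pd q Q2 + - tsallis_price pd q (Q1 @ Q2)) UNIV"
    by (rule has_sum_add[OF has_sum_add[OF P1 P2] hs_neg[OF P12]])
  have "Eb + - W \<le> tsallis_price pd q Q1 + tsallis_price pd q Q2 + - tsallis_price pd q (Q1 @ Q2)"
  proof (rule has_sum_mono[OF L R])
    fix D
    show "pd D * b D powr s + - (pd D * hW (K D))
        \<le> pd D * gg (a D) + pd D * gg (b D) + - (pd D * gg (r D))"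
    proof (cases "pd D = 0")
      case True then show ?thesis by simp
    next
      case False
      then have p0: "pd D > 0" using nn[of D] by simp
      have r0: "r D > 0" using pr[of D] p0 by simp
      have Q1: "(r D / a D) powr s \<le> 1 - a D powr s + r D powr s"
        by (rule P1_ineq) (use r0 ra a1 s0 in \<open>auto intro: order.strict_trans2\<close>)
      have Q2: "s * b D powr s - s * (a D * (b D * b D powr s)) / r D \<le> (r D / a D) powr s - b D powr s"
        by (rule P2_ineq) (use r0 ra rb s0 in \<open>auto intro: order.strict_trans2\<close>)
      have G: "gg (a D) + gg (b D) - gg (r D) = (1 - a D powr s - b D powr s + r D powr s) / s"
        unfolding gg_def s_def[symmetric] by (simp add: add_divide_distrib diff_divide_distrib)
      have "b D powr s - (a D * (b D * b D powr s)) / r D \<le> gg (a D) + gg (b D) - gg (r D)"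
        unfolding G by (rule comb[OF s0 Q1]) (use Q2 in \<open>simp add: times_divide_eq_right\<close>)
      from mult_left_mono[OF this nn[of D]] have
        "pd D * (b D powr s - (a D * (b D * b D powr s)) / r D) \<le> pd D * (gg (a D) + gg (b D) - gg (r D))" .
      then show ?thesis unfolding hWK by (simp only: right_diff_distrib distrib_left)
    qed
  qed
  with WEb show ?thesis by simp
qed

end

theorem lemma18:
  fixes pd :: "'i::countable \<Rightarrow> real" and q :: real and L :: "('i \<Rightarrow> 'o) set"
  assumes "\<And>D. pd D \<ge> 0"
    and "(pd has_sum 1) UNIV"
    and "q > 1"
  shows "arbitrage_free L (tsallis_price pd q)"
  unfolding arbitrage_free_def
  using mono_part[OF assms] sub_part[OF assms] by blast

end
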